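(* Let $n\geq 2$, $R_m,k>0$ and $0\leq\alpha\leq 1$. Let $\Omega\subset\mathbb{R}^n$ be a bounded Lipschitz domain of diameter at most $R_m$ whose complement $\mathbb{R}^n\setminus\Omega$ is connected. Then there exists a positive constant $C$, depending only on $k$, $R_m$ and $n$, such that for every $\varphi\in C^\alpha(\overline{\Omega})$ satisfying \[ \frac{\sup_{\partial\Omega}|\varphi|}{\|\varphi\|_{C^\alpha(\overline\Omega)}}\geq C\,\big(\operatorname{diam}(\Omega)\big)^\alpha, \] the source $\chi_\Omega\varphi$ radiates a non-zero far-field pattern at wavenumber $k$.
   Context: Source scattering: for a bounded domain $\Omega\subset\mathbb{R}^n$, a function $\varphi$ on $\overline\Omega$ and a wavenumber $k>0$, let $f=\chi_\Omega\varphi$ and let $u\in H^2_{loc}(\mathbb{R}^n)$ be the unique solution of $(\Delta+k^2)u=f$ in $\mathbb{R}^n$ satisfying the Sommerfeld radiation condition $\lim_{r\to\infty}r^{(n-1)/2}(\partial_r-ik)u=0$, $r=|x|$. Its far-field pattern is $u_\infty(\hat x)=C_{n,k}\int_{\mathbb{R}^n}e^{-ik\hat x\cdot y}f(y)\,dy$, $\hat x\in\mathbb{S}^{n-1}$, where $C_{n,k}=\frac{-i}{\sqrt{8\pi}}\big(\frac{k}{2\pi}\big)^{(n-2)/2}e^{-(n-1)\pi i/4}$; equivalently $u(x)=\frac{e^{ik|x|}}{|x|^{(n-1)/2}}u_\infty(x/|x|)+$ lower order terms as $|x|\to\infty$. The source "radiates a non-zero far-field pattern" if $u_\infty\not\equiv0$,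 and is "radiationless" if $u_\infty\equiv 0$. $\|\cdot\|_{C^\alpha}$ is the standard Hölder norm. Standing assumption: all bounded domains $\Omega$ considered satisfy $H^2_0(\Omega)=\{u|_\Omega: u\in H^2(\mathbb{R}^n),\ u=0 \text{ in } \mathbb{R}^n\setminus\overline\Omega\}$. *)

theory Defs
  imports "HOL-Analysis.Analysis"
begin

definition lipschitz_domain :: "(real^'n) set \<Rightarrow> bool" where
  "lipschitz_domain \<Omega> \<longleftrightarrow>
     open \<Omega> \<and> bounded \<Omega> \<and> connected \<Omega> \<and> \<Omega> \<noteq> {} \<and>
     (\<forall>p\<in>frontier \<Omega>. \<exists>r>0. \<exists>e::real^'n. norm e = 1 \<and>
        (\<exists>g::real^'n \<Rightarrow> real. (\<exists>L. L-lipschitz_on {y. y \<bullet> e = 0} g) \<and>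
           \<Omega> \<inter> ball p r = {x \<in> ball p r. x \<bullet> e < g (x - (x \<bullet> e) *\<^sub>R e)}))"

definition holder_space :: "real \<Rightarrow> (real^'n) set \<Rightarrow> (real^'n \<Rightarrow> complex) \<Rightarrow> bool" where
  "holder_space \<alpha> S \<phi> \<longleftrightarrow> continuous_on S \<phi> \<and> bdd_above ((\<lambda>x. norm (\<phi> x)) ` S) \<and>
     bdd_above {norm (\<phi> x - \<phi> y) / dist x y powr \<alpha> | x y. x \<in> S \<and> y \<in> S \<and> x \<noteq> y}"

definition holder_norm :: "real \<Rightarrow> (real^'n) set \<Rightarrow> (real^'n \<Rightarrow> complex) \<Rightarrow> real" where
  "holder_norm \<alpha> S \<phi> = (SUP x\<in>S. norm (\<phi> x)) +
     (if \<alpha> = 0 then 0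
      else Sup {norm (\<phi> x - \<phi> y) / dist x y powr \<alpha> | x y. x \<in> S \<and> y \<in> S \<and> x \<noteq> y})"

definition far_field_const :: "nat \<Rightarrow> real \<Rightarrow> complex" where
  "far_field_const n k = (- \<i> / complex_of_real (sqrt (8 * pi))) *
      complex_of_real ((k / (2 * pi)) powr ((real n - 2) / 2)) *
      exp (- (complex_of_real ((real n - 1) * pi / 4)) * \<i>)"

definition far_field :: "real \<Rightarrow> (real^'n) set \<Rightarrow> (real^'n \<Rightarrow> complex) \<Rightarrow> real^'n \<Rightarrow> complex" where
  "far_field k \<Omega> \<phi> xh = far_field_const CARD('n) k *
      integral UNIV (\<lambda>y. exp (- \<i> * complex_of_real (k * (xh \<bullet> y))) * (indicator \<Omega> y * \<phi> y))"

definition radiates_nonzero :: "real \<Rightarrow> (real^'n) set \<Rightarrow> (real^'n \<Rightarrow> complex) \<Rightarrow> bool" where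
  "radiates_nonzero k \<Omega> \<phi> \<longleftrightarrow> (\<exists>xh::real^'n. norm xh = 1 \<and> far_field k \<Omega> \<phi> xh \<noteq> 0)"

end

theory Submission
  imports Defs
begin
lemma exp_i_diff: "norm (exp (\<i> * complex_of_real a) - exp (\<i> * complex_of_real b)) \<le> \<bar>a - b\<bar>"
proof -
  have "exp (\<i> * complex_of_real a) - exp (\<i> * complex_of_real b) = exp (\<i> * complex_of_real b) * (exp (\<i> * complex_of_real (a-b)) - 1)"
    by (simp add: algebra_simps flip: exp_add)
  then have e: "norm (exp (\<i> * complex_of_real a) - exp (\<i> * complex_of_real b)) = norm (cis (a-b) - 1)"
    by (simp add: norm_mult cis_conv_exp)
  define t where "t = a - b"
  have "(norm (cis t - 1))^2 = (cos t - 1)^2 + (sin t)^2"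
    by (simp add: cmod_def cis.code)
  also have "\<dots> = 2 - 2 * cos t" by (simp add: power2_eq_square algebra_simps sin_squared_eq)
  also have "\<dots> = 4 * (sin (t/2))^2" using cos_double_sin[of "t/2"] by simp
  also have "\<dots> \<le> 4 * (t/2)^2"
    using power_mono[OF abs_sin_x_le_abs_x[of "t/2"] abs_ge_zero, of 2] unfolding power2_abs by simp
  also have "\<dots> = t^2" by (simp add: power2_eq_square)
  finally have "(norm (cis t - 1))^2 \<le> \<bar>t\<bar>^2" by simp
  then have "norm (cis t - 1) \<le> \<bar>t\<bar>" by (rule power2_le_imp_le) simp
  with e t_def show ?thesis by simp
qed
lemma core_nonzero:
  fixes \<Omega> :: "(real^'n) set" and \<phi> :: "real^'n \<Rightarrow> complex" and xh :: "real^'n"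
  assumes op: "open \<Omega>" and bd: "bounded \<Omega>" and ne: "\<Omega> \<noteq> {}"
    and cont: "continuous_on (closure \<Omega>) \<phi>"
    and osc: "\<And>y. y \<in> \<Omega> \<Longrightarrow> norm (\<phi> y - c0) \<le> \<delta>"
    and mb: "\<And>y. y \<in> \<Omega> \<Longrightarrow> norm (\<phi> y) \<le> Mb"
    and k: "k \<ge> 0" and xh: "norm xh = 1"
    and key: "k * diameter \<Omega> * Mb + \<delta> < norm c0"
  shows "integral UNIV (\<lambda>y. exp (- \<i> * complex_of_real (k * (xh \<bullet> y))) * (indicator \<Omega> y * \<phi> y)) \<noteq> 0"
proof -
  define f where "f y = exp (- \<i> * complex_of_real (k * (xh \<bullet> y))) * \<phi> y" for y
  obtain y0 where y0: "y0 \<in> \<Omega>" using ne by blast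
  define c where "c = exp (- \<i> * complex_of_real (k * (xh \<bullet> y0))) * c0"
  have lm: "\<Omega> \<in> lmeasurable" using lmeasurable_open[OF bd op] .
  have eq1: "(\<lambda>y. exp (- \<i> * complex_of_real (k * (xh \<bullet> y))) * (indicator \<Omega> y * \<phi> y))
      = (\<lambda>y. if y \<in> \<Omega> then f y else 0)"
    by (auto simp: f_def indicator_def)
  have fcont: "continuous_on \<Omega> f"
    unfolding f_def
    by (intro continuous_intros continuous_on_subset[OF cont closure_subset])
  have Mb0: "0 \<le> Mb" using mb[OF y0] norm_ge_zero order_trans by blast
  have nf: "norm (f y) \<le> Mb" if "y \<in> \<Omega>" for y
  proof -
    have "norm (exp (- \<i> * complex_of_real (k * (xh \<bullet> y)))) = 1"
      by (simp add: norm_exp)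
    then show ?thesis using mb[OF that] by (simp add: f_def norm_mult)
  qed
  have fint: "f integrable_on \<Omega>"
  proof -
    have "f absolutely_integrable_on \<Omega>"
      by (rule measurable_bounded_by_integrable_imp_absolutely_integrable[where g="\<lambda>_. Mb"])
         (use continuous_imp_measurable_on_sets_lebesgue[OF fcont fmeasurableD[OF lm]] lm nf integrable_on_const[OF lm] in auto)
    then show ?thesis using absolutely_integrable_on_def by blast
  qed
  have cint: "((\<lambda>y. c) has_integral (measure lebesgue \<Omega> *\<^sub>R c)) \<Omega>"
    using has_integral_scaleR_left[OF integrable_integral[OF integrable_on_const[OF lm, of "1::real"]], of c] lmeasure_integral[OF lm] by simp
  have E: "norm (f y - c) \<le> k * diameter \<Omega> * Mb + \<delta>" if y: "y \<in> \<Omega>" for y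
  proof -
    let ?e = "\<lambda>y. exp (- \<i> * complex_of_real (k * (xh \<bullet> y)))"
    have "f y - c = (?e y - ?e y0) * \<phi> y + ?e y0 * (\<phi> y - c0)"
      by (simp add: f_def c_def algebra_simps)
    then have "norm (f y - c) \<le> norm (?e y - ?e y0) * norm (\<phi> y) + norm (?e y0) * norm (\<phi> y - c0)"
      by (metis norm_mult norm_triangle_ineq)
    moreover have "norm (?e y0) = 1" by (simp add: norm_exp)
    moreover have "norm (?e y - ?e y0) \<le> k * diameter \<Omega>"
    proof -
      have "?e y = exp (\<i> * complex_of_real (- (k * (xh \<bullet> y))))" by simp
      moreover have "?e y0 = exp (\<i> * complex_of_real (- (k * (xh \<bullet> y0))))" by simp
      ultimately have "norm (?e y - ?e y0) \<le> \<bar>k * (xh \<bullet> y0) - k * (xh \<bullet> y)\<bar>"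
        using exp_i_diff[of "- (k * (xh \<bullet> y))" "- (k * (xh \<bullet> y0))"] by simp
      also have "\<dots> = k * \<bar>xh \<bullet> (y0 - y)\<bar>" using k by (simp add: inner_diff_right abs_mult flip: right_diff_distrib)
      also have "\<dots> \<le> k * (norm xh * norm (y0 - y))"
        using k by (intro mult_left_mono Cauchy_Schwarz_ineq2) auto
      also have "\<dots> = k * dist y0 y" using xh by (simp add: dist_norm)
      also have "\<dots> \<le> k * diameter \<Omega>"
        using k diameter_bounded_bound[OF bd y0 y] by (simp add: mult_left_mono)
      finally show ?thesis .
    qed
    moreover have "k * diameter \<Omega> \<ge> 0" using k diameter_ge_0[OF bd] by simp
    ultimately have "norm (?e y - ?e y0) * norm (\<phi> y) \<le> k * diameter \<Omega> * Mb"
      using mb[OF y] by (intro mult_mono) auto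
    with \<open>norm (f y - c) \<le> _\<close> \<open>norm (?e y0) = 1\<close> osc[OF y] show ?thesis
      by (metis (no_types, lifting) add_mono mult_1 order_trans)
  qed
  have dint: "(\<lambda>y. f y - c) integrable_on \<Omega>"
    using fint cint by (intro integrable_diff) auto
  have nb: "norm (integral \<Omega> (\<lambda>y. f y - c)) \<le> measure lebesgue \<Omega> * (k * diameter \<Omega> * Mb + \<delta>)"
  proof -
    have "norm (integral \<Omega> (\<lambda>y. f y - c)) \<le> integral \<Omega> (\<lambda>y. k * diameter \<Omega> * Mb + \<delta>)"
      by (rule integral_norm_bound_integral) (use dint E integrable_on_const[OF lm] in auto)
    also have "\<dots> = measure lebesgue \<Omega> * (k * diameter \<Omega> * Mb + \<delta>)"
      using lm integral_mult_left[of \<Omega> "\<lambda>_. 1::real" "k * diameter \<Omega> * Mb + \<delta>"] by (simp add: lmeasure_integral)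
    finally show ?thesis .
  qed
  have mpos: "measure lebesgue \<Omega> > 0"
  proof -
    obtain r where r: "r > 0" "ball y0 r \<subseteq> \<Omega>" using op y0 open_contains_ball by blast
    have "measure lebesgue (ball y0 r) > 0" using r by simp
    also have "measure lebesgue (ball y0 r) \<le> measure lebesgue \<Omega>"
      using r lm by (intro measure_mono_fmeasurable) auto
    finally show ?thesis .
  qed
  have ieq: "measure lebesgue \<Omega> *\<^sub>R c = integral \<Omega> f - integral \<Omega> (\<lambda>y. f y - c)"
    using integral_diff[OF fint has_integral_integrable[OF cint]] integral_unique[OF cint] by simp
  have "norm c = norm c0" by (simp add: c_def norm_mult norm_exp)
  have "measure lebesgue \<Omega> * norm c0 = norm (measure lebesgue \<Omega> *\<^sub>R c)"
    using mpos \<open>norm c = norm c0\<close> by simp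
  also have "\<dots> \<le> norm (integral \<Omega> f) + norm (integral \<Omega> (\<lambda>y. f y - c))"
    unfolding ieq by (rule norm_triangle_ineq4)
  finally have "norm (integral \<Omega> f) \<ge> measure lebesgue \<Omega> * norm c0 - measure lebesgue \<Omega> * (k * diameter \<Omega> * Mb + \<delta>)"
    using nb by linarith
  moreover have "measure lebesgue \<Omega> * (k * diameter \<Omega> * Mb + \<delta>) < measure lebesgue \<Omega> * norm c0"
    using mpos key by simp
  ultimately have "integral \<Omega> f \<noteq> 0" by auto
  then show ?thesis unfolding eq1 integral_restrict_UNIV .
qed

theorem theorem2p1:
  fixes k Rm :: real
  assumes "CARD('n) \<ge> 2" and "k > 0" and "Rm > 0"
  shows "\<exists>C>0. \<forall>\<alpha>::real. \<forall>\<Omega>::(real^'n) set. \<forall>\<phi>::real^'n \<Rightarrow> complex.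
     0 \<le> \<alpha> \<and> \<alpha> \<le> 1 \<and> lipschitz_domain \<Omega> \<and> diameter \<Omega> \<le> Rm \<and> connected (- \<Omega>) \<and>
     holder_space \<alpha> (closure \<Omega>) \<phi> \<and>
     (SUP x\<in>frontier \<Omega>. norm (\<phi> x)) / holder_norm \<alpha> (closure \<Omega>) \<phi> \<ge> C * diameter \<Omega> powr \<alpha>
     \<longrightarrow> radiates_nonzero k \<Omega> \<phi>"
proof (intro exI[of _ "4 * k + 4"] conjI allI impI)
  show "(0::real) < 4 * k + 4" using assms by simp
next
  fix \<alpha> :: real and \<Omega> :: "(real^'n) set" and \<phi> :: "real^'n \<Rightarrow> complex"
  define C where "C = 4 * k + 4"
  assume H: "0 \<le> \<alpha> \<and> \<alpha> \<le> 1 \<and> lipschitz_domain \<Omega> \<and> diameter \<Omega> \<le> Rm \<and> connected (- \<Omega>) \<and>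
     holder_space \<alpha> (closure \<Omega>) \<phi> \<and>
     (SUP x\<in>frontier \<Omega>. norm (\<phi> x)) / holder_norm \<alpha> (closure \<Omega>) \<phi> \<ge> (4 * k + 4) * diameter \<Omega> powr \<alpha>"
  have a0: "0 \<le> \<alpha>" and a1: "\<alpha> \<le> 1" using H by auto
  have op: "open \<Omega>" and bd: "bounded \<Omega>" and ne: "\<Omega> \<noteq> {}"
    using H unfolding lipschitz_domain_def by auto
  let ?K = "closure \<Omega>"
  define B where "B = (SUP x\<in>frontier \<Omega>. norm (\<phi> x))"
  define M where "M = (SUP x\<in>?K. norm (\<phi> x))"
  define SS where "SS = {norm (\<phi> x - \<phi> y) / dist x y powr \<alpha> | x y. x \<in> ?K \<and> y \<in> ?K \<and> x \<noteq> y}"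
  define S where "S = (if \<alpha> = 0 then 0 else Sup SS)"
  define N where "N = holder_norm \<alpha> ?K \<phi>"
  define d where "d = diameter \<Omega>"
  have N_eq: "N = M + S" unfolding N_def M_def S_def SS_def holder_norm_def by simp
  have hyp: "B / N \<ge> C * d powr \<alpha>" using H unfolding B_def N_def C_def d_def by simp
  have cont: "continuous_on ?K \<phi>" and bddK: "bdd_above ((\<lambda>x. norm (\<phi> x)) ` ?K)"
    and bddS: "bdd_above SS"
    using H unfolding holder_space_def SS_def by auto
  have bdK: "bounded ?K" using bd by (rule bounded_closure)
  obtain y0 r where y0: "y0 \<in> \<Omega>" and r: "r > 0" "ball y0 r \<subseteq> \<Omega>"
    using ne op open_contains_ball by blast
  have dpos: "d > 0"
  proof -
    have "diameter (ball y0 r) \<le> diameter \<Omega>" by (rule diameter_subset[OF r(2) bd])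
    then show ?thesis using r unfolding d_def by simp
  qed
  have fr_ne: "frontier \<Omega> \<noteq> {}"
    using frontier_not_empty[OF ne] bd not_bounded_UNIV by blast
  have fr_sub: "frontier \<Omega> \<subseteq> ?K" by (simp add: frontier_def)
  have bddF: "bdd_above ((\<lambda>x. norm (\<phi> x)) ` frontier \<Omega>)"
    using bddK fr_sub by (meson bdd_above_mono image_mono)
  have BM: "B \<le> M" unfolding B_def M_def
    by (rule cSUP_subset_mono[OF fr_ne bddK fr_sub]) simp
  have B0: "B \<ge> 0"
  proof -
    obtain z where "z \<in> frontier \<Omega>" using fr_ne by blast
    then have "norm (\<phi> z) \<le> B" unfolding B_def by (intro cSUP_upper bddF)
    then show ?thesis using norm_ge_zero order_trans by blast
  qed
  have S0: "S \<ge> 0"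
  proof (cases "\<alpha> = 0")
    case False
    define y1 where "y1 = y0 + (r/2) *\<^sub>R axis undefined 1"
    have "dist y0 y1 = r/2" using r by (simp add: y1_def dist_norm)
    then have y1: "y1 \<in> ball y0 r" "y1 \<noteq> y0" using r by auto
    then have "norm (\<phi> y0 - \<phi> y1) / dist y0 y1 powr \<alpha> \<in> SS"
      unfolding SS_def using r y0 closure_subset by blast
    then have "norm (\<phi> y0 - \<phi> y1) / dist y0 y1 powr \<alpha> \<le> Sup SS" by (rule cSup_upper[OF _ bddS])
    then show ?thesis using False unfolding S_def by (smt (verit) divide_nonneg_nonneg norm_ge_zero powr_ge_zero)
  qed (simp add: S_def)
  have Npos: "N > 0"
  proof (rule ccontr)
    assume "\<not> N > 0"
    then have "B / N \<le> 0" using B0 by (simp add: divide_nonneg_nonpos)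
    moreover have "C * d powr \<alpha> > 0" using dpos assms unfolding C_def by simp
    ultimately show False using hyp by linarith
  qed
  have BN: "B \<ge> C * d powr \<alpha> * N" using hyp Npos by (simp add: pos_le_divide_eq)
  have Cd1: "C * d powr \<alpha> \<le> 1"
  proof -
    have "C * d powr \<alpha> * N \<le> 1 * N" using BN BM N_eq S0 by simp
    then show ?thesis using Npos by simp
  qed
  have C4: "C \<ge> 4" using assms unfolding C_def by simp
  have an0: "\<alpha> \<noteq> 0" using Cd1 C4 dpos by auto
  have d1: "d < 1"
  proof (rule ccontr)
    assume "\<not> d < 1"
    then have "d powr \<alpha> \<ge> 1" using a0 by (intro ge_one_powr_ge_zero) auto
    then have "C * 1 \<le> C * d powr \<alpha>" using C4 by (intro mult_left_mono) auto
    then show False using Cd1 C4 by linarith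
  qed
  have dC: "d \<le> 1 / C"
  proof -
    have "d = d powr 1" using dpos by simp
    also have "\<dots> \<le> d powr \<alpha>" using a1 dpos d1 by (intro powr_mono') auto
    finally have "d \<le> d powr \<alpha>" .
    then have "C * d \<le> C * d powr \<alpha>" using C4 by (intro mult_left_mono) auto
    then have "C * d \<le> 1" using Cd1 by linarith
    then show ?thesis using C4 by (simp add: field_simps)
  qed
  have Bpos: "B > 0" using BN Npos dpos C4 by (smt (verit) mult_pos_pos powr_gt_zero)
  have SdB: "S * d powr \<alpha> \<le> B / C"
  proof -
    have M0: "M \<ge> 0" using B0 BM by simp
    have "S * d powr \<alpha> \<le> N * d powr \<alpha>" using N_eq M0 by (intro mult_right_mono) auto
    also have "\<dots> \<le> B / C" using BN C4 by (simp add: field_simps)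
    finally show ?thesis .
  qed
  obtain x1 where x1: "x1 \<in> frontier \<Omega>" "norm (\<phi> x1) > 3 * B / 4"
  proof -
    have "3 * B / 4 < B" using Bpos by simp
    then show ?thesis using that unfolding B_def by (subst (asm) less_cSUP_iff[OF fr_ne bddF]) blast
  qed
  have x1B: "norm (\<phi> x1) \<le> B" unfolding B_def using x1(1) by (intro cSUP_upper bddF)
  have x1K: "x1 \<in> ?K" using x1 fr_sub by blast
  have osc: "norm (\<phi> y - \<phi> x1) \<le> B / C" if y: "y \<in> \<Omega>" for y
  proof (cases "y = x1")
    case True then show ?thesis using Bpos C4 by simp
  next
    case False
    have yK: "y \<in> ?K" using y closure_subset by blast
    have dy: "dist y x1 > 0" using False by simp
    have "norm (\<phi> y - \<phi> x1) / dist y x1 powr \<alpha> \<in> SS"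
      unfolding SS_def using yK x1K False by blast
    then have q: "norm (\<phi> y - \<phi> x1) / dist y x1 powr \<alpha> \<le> S"
      using cSup_upper[OF _ bddS] an0 unfolding S_def by simp
    have "dist y x1 \<le> diameter ?K" by (rule diameter_bounded_bound[OF bdK yK x1K])
    then have "dist y x1 \<le> d" unfolding d_def using diameter_closure[OF bd] by simp
    then have dd: "dist y x1 powr \<alpha> \<le> d powr \<alpha>" using a0 by (intro powr_mono2) auto
    have "norm (\<phi> y - \<phi> x1) \<le> S * dist y x1 powr \<alpha>"
      using q dy by (simp add: pos_divide_le_eq)
    also have "\<dots> \<le> S * d powr \<alpha>" using dd S0 by (intro mult_left_mono) auto
    finally show ?thesis using SdB by simp
  qed
  have mb: "norm (\<phi> y) \<le> B + B / C" if "y \<in> \<Omega>" for y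
    using osc[OF that] x1B norm_triangle_ineq2[of "\<phi> y" "\<phi> x1"] by linarith
  have key: "k * diameter \<Omega> * (B + B / C) + B / C < norm (\<phi> x1)"
  proof -
    have BC: "B / C \<le> B" using Bpos C4 by (simp add: field_simps)
    have "k * d * (B + B / C) \<le> k * (1 / C) * (2 * B)"
      using dC dpos BC Bpos assms C4 by (intro mult_mono) auto
    moreover have "k * (1 / C) * (2 * B) + B / C = (2 * k + 1) * B / C" using C4 by (simp add: field_simps)
    ultimately have "k * d * (B + B / C) + B / C \<le> (2 * k + 1) * B / C" by linarith
    also have "\<dots> < B / 2" using Bpos assms unfolding C_def by (simp add: field_simps)
    finally show ?thesis using x1(2) Bpos unfolding d_def by linarith
  qed
  have I: "integral UNIV (\<lambda>y. exp (- \<i> * complex_of_real (k * (axis undefined 1 \<bullet> y))) * (indicator \<Omega> y * \<phi> y)) \<noteq> 0"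
    by (rule core_nonzero[OF op bd ne cont osc mb _ _ key]) (use assms in auto)
  have FC: "far_field_const CARD('n) k \<noteq> 0"
    unfolding far_field_const_def using assms by simp
  show "radiates_nonzero k \<Omega> \<phi>"
    unfolding radiates_nonzero_def far_field_def
    by (intro exI[of _ "axis undefined 1"]) (use I FC in simp)
qed

end
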